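(* For $d\in[6.74,7.5]$ let $x(3,d)$ be the unique solution of $\Psi_d(x)=x$ in $[\frac38,\frac12]$ and set $\Phi^\star(d)=\Phi_3(d,x(3,d))$. Then $d\mapsto\Phi^\star(d)$ is continuous on $[6.74,7.5]$, $\Phi^\star(6.74)>0$ and $\Phi^\star(7.5)<0$.
   Context: $\hat\Psi(x)=\frac{1-2x^{2}}{1-x^{2}}$, $\dot\Psi(v)=\frac{1-v^{d-1}}{2-v^{d-1}}$, $\Psi_d=\dot\Psi\circ\hat\Psi$; $\Phi_3(d,x)=-\log(1-x)-d(\frac23-d^{-1})\log(1-2x^3)+(d-1)\log(1-x^{2})$. (Existence and uniqueness of $x(3,d)$ for these $d$ is known.) *)

theory Defs
  imports "HOL-Analysis.Analysis"
begin

definition Psi_hat :: "real \<Rightarrow> real" where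
  "Psi_hat x = (1 - 2 * x^2) / (1 - x^2)"

definition Psi_dot :: "real \<Rightarrow> real \<Rightarrow> real" where
  "Psi_dot d v = (1 - v powr (d - 1)) / (2 - v powr (d - 1))"

definition Psi :: "real \<Rightarrow> real \<Rightarrow> real" where
  "Psi d x = Psi_dot d (Psi_hat x)"

definition Phi3 :: "real \<Rightarrow> real \<Rightarrow> real" where
  "Phi3 d x = - ln (1 - x) - d * (2/3 - 1/d) * ln (1 - 2 * x^3) + (d - 1) * ln (1 - x^2)"

definition xfix :: "real \<Rightarrow> real" where
  "xfix d = (THE x. x \<in> {3/8..1/2} \<and> Psi d x = x)"

definition Phi_star :: "real \<Rightarrow> real" where
  "Phi_star d = Phi3 d (xfix d)"

end

theory Submission
  imports Defs
begin


lemma psi_hat_bounds: assumes "0 < x" "x \<le> 1/2" shows "0 < Psi_hat x" "Psi_hat x < 1"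
proof -
  have "x*x \<le> 1/2*(1/2)" using assms by (intro mult_mono) auto
  then have "x^2 \<le> 1/4" by (simp add: power2_eq_square)
  then show "0 < Psi_hat x" "Psi_hat x < 1" unfolding Psi_hat_def using assms
    by (auto simp: divide_simps) 
qed

definition SD :: "real set" where "SD = {6.74..7.5}"
definition TX :: "real set" where "TX = {3/8..1/2}"

lemma w_bounds: assumes "d \<in> SD" "x \<in> TX" shows "0 < Psi_hat x powr (d - 1)" "Psi_hat x powr (d - 1) \<le> 1"
proof -
  have x: "0 < x" "x \<le> 1/2" using assms(2) by (auto simp: TX_def)
  have d: "d - 1 \<ge> 0" using assms(1) by (auto simp: SD_def)
  show "0 < Psi_hat x powr (d - 1)" using psi_hat_bounds[OF x] by simp
  show "Psi_hat x powr (d - 1) \<le> 1" using psi_hat_bounds[OF x] d by (simp add: powr_le1)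
qed

lemma cont_Psi_joint: "continuous_on (SD \<times> TX) (\<lambda>p. Psi (fst p) (snd p))"
proof -
  have pos: "\<forall>p\<in>SD \<times> TX. Psi_hat (snd p) \<noteq> 0"
  proof
    fix p assume "p \<in> SD \<times> TX"
    then have "0 < snd p" "snd p \<le> 1/2" by (auto simp: TX_def)
    from psi_hat_bounds(1)[OF this] show "Psi_hat (snd p) \<noteq> 0" by simp
  qed
  have hx: "\<forall>p\<in>SD \<times> TX. 1 - (snd p)^2 \<noteq> 0"
  proof
    fix p assume "p \<in> SD \<times> TX"
    then have "0 \<le> snd p" "snd p \<le> 1/2" by (auto simp: TX_def)
    then have "snd p * snd p \<le> 1/2 * (1/2)" by (intro mult_mono) auto
    then have "(snd p)^2 < 1" by (simp add: power2_eq_square)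
    then show "1 - (snd p)^2 \<noteq> 0" by simp
  qed
  have "continuous_on (SD \<times> TX) (\<lambda>p. Psi_hat (snd p))"
    unfolding Psi_hat_def using hx by (intro continuous_intros) auto
  then have c: "continuous_on (SD \<times> TX) (\<lambda>p. Psi_hat (snd p) powr (fst p - 1))"
    using pos by (intro continuous_intros) auto
  have nz: "\<forall>p\<in>SD \<times> TX. 2 - Psi_hat (snd p) powr (fst p - 1) \<noteq> 0"
    using w_bounds by fastforce
  show ?thesis unfolding Psi_def Psi_dot_def
    by (intro continuous_intros c nz)
qed

lemma cont_Psi: assumes "d \<in> SD" shows "continuous_on TX (Psi d)"
proof -
  have "continuous_on TX ((\<lambda>p. Psi (fst p) (snd p)) \<circ> (\<lambda>x. (d, x)))"
    by (rule continuous_on_compose) (auto intro!: continuous_intros continuous_on_subset[OF cont_Psi_joint] simp: assms)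
  then show ?thesis by (simp add: o_def)
qed


lemma xfix_prop: assumes U: "\<forall>d\<in>{6.74..7.5::real}. \<exists>!x. x \<in> {3/8..1/2} \<and> Psi d x = x"
  and d: "d \<in> SD" shows "xfix d \<in> TX \<and> Psi d (xfix d) = xfix d"
  using theI'[OF U[rule_format, OF d[unfolded SD_def]]] unfolding xfix_def TX_def .

lemma xfix_eq: assumes U: "\<forall>d\<in>{6.74..7.5::real}. \<exists>!x. x \<in> {3/8..1/2} \<and> Psi d x = x"
  and d: "d \<in> SD" and y: "y \<in> TX" "Psi d y = y" shows "xfix d = y"
  unfolding xfix_def using the1_equality[OF U[rule_format, OF d[unfolded SD_def]]] y by (auto simp: TX_def)

lemma xfix_loc: assumes U: "\<forall>d\<in>{6.74..7.5::real}. \<exists>!x. x \<in> {3/8..1/2} \<and> Psi d x = x"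
  and d: "d \<in> SD" and ab: "3/8 \<le> a" "a \<le> b" "b \<le> 1/2" and ga: "a \<le> Psi d a" and gb: "Psi d b \<le> b"
  shows "a \<le> xfix d \<and> xfix d \<le> b"
proof -
  have "continuous_on {a..b} (Psi d)" using cont_Psi[OF d] by (rule continuous_on_subset) (use ab in \<open>auto simp: TX_def\<close>)
  then have c: "continuous_on {a..b} (\<lambda>x. Psi d x - x)" by (intro continuous_intros)
  obtain y where y: "a \<le> y" "y \<le> b" "Psi d y - y = 0"
    using IVT2'[of "\<lambda>x. Psi d x - x" b 0 a, OF _ _ ab(2) c] ga gb by auto
  have "xfix d = y" by (rule xfix_eq[OF U d]) (use y ab in \<open>auto simp: TX_def\<close>)
  then show ?thesis using y by simp
qed

lemma cont_xfix: assumes U: "\<forall>d\<in>{6.74..7.5::real}. \<exists>!x. x \<in> {3/8..1/2} \<and> Psi d x = x"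
  shows "continuous_on SD xfix"
proof -
  have eq: "(\<lambda>x. (x, xfix x)) ` SD = {p \<in> SD \<times> TX. Psi (fst p) (snd p) - snd p = 0}"
  proof
    show "(\<lambda>x. (x, xfix x)) ` SD \<subseteq> {p \<in> SD \<times> TX. Psi (fst p) (snd p) - snd p = 0}"
      using xfix_prop[OF U] by auto
    show "{p \<in> SD \<times> TX. Psi (fst p) (snd p) - snd p = 0} \<subseteq> (\<lambda>x. (x, xfix x)) ` SD"
    proof
      fix p assume h: "p \<in> {p \<in> SD \<times> TX. Psi (fst p) (snd p) - snd p = 0}"
      then have "xfix (fst p) = snd p" using xfix_eq[OF U, of "fst p" "snd p"] by auto
      then have "p = (fst p, xfix (fst p))" by simp
      moreover have "fst p \<in> SD" using h by auto
      ultimately show "p \<in> (\<lambda>x. (x, xfix x)) ` SD" by (rule image_eqI)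
    qed
  qed
  have cl0: "closed (SD \<times> TX)" by (simp add: SD_def TX_def closed_Times)
  have "closed {p \<in> SD \<times> TX. Psi (fst p) (snd p) - snd p = 0}"
    by (rule continuous_closed_preimage_constant[OF _ cl0]) (intro continuous_intros cont_Psi_joint)
  then have cl: "closed ((\<lambda>x. (x, xfix x)) ` SD)" using eq by simp
  have cT: "compact TX" by (simp add: TX_def)
  have fT: "xfix \<in> SD \<rightarrow> TX" using xfix_prop[OF U] by auto
  show ?thesis using continuous_from_closed_graph[OF cT fT cl] .
qed

lemma cont_Phi_star: assumes U: "\<forall>d\<in>{6.74..7.5::real}. \<exists>!x. x \<in> {3/8..1/2} \<and> Psi d x = x"
  shows "continuous_on SD Phi_star"
proof -
  have c: "continuous_on SD xfix" by (rule cont_xfix[OF U])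
  have x: "\<And>d. d \<in> SD \<Longrightarrow> 3/8 \<le> xfix d \<and> xfix d \<le> 1/2" using xfix_prop[OF U] by (auto simp: TX_def)
  have n1: "\<forall>d\<in>SD. 1 - xfix d \<noteq> 0" using x by force
  have n2: "\<forall>d\<in>SD. 1 - xfix d ^ 2 \<noteq> 0"
  proof
    fix d assume "d \<in> SD"
    then have "0 \<le> xfix d" "xfix d \<le> 1/2" using x by force+
    then have "xfix d * xfix d \<le> 1/2 * (1/2)" by (intro mult_mono) auto
    then show "1 - xfix d ^ 2 \<noteq> 0" by (simp add: power2_eq_square)
  qed
  have n3: "\<forall>d\<in>SD. 1 - 2 * xfix d ^ 3 \<noteq> 0"
  proof
    fix d assume "d \<in> SD"
    then have "0 \<le> xfix d" "xfix d \<le> 1/2" using x by force+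
    then have "xfix d ^ 3 \<le> (1/2) ^ 3" by (intro power_mono) auto
    then show "1 - 2 * xfix d ^ 3 \<noteq> 0" by (simp add: power_divide)
  qed
  have n4: "\<forall>d\<in>SD. d \<noteq> 0" by (auto simp: SD_def)
  show ?thesis unfolding Phi_star_def Phi3_def
    by (intro continuous_intros c n1 n2 n3 n4)
qed



lemma deriv_Phi3: assumes "0 \<le> x" "x < 1/2+1/10"
  shows "((\<lambda>x. Phi3 d x) has_real_derivative
     (1/(1-x) + d*(2/3-1/d)*(6*x^2)/(1-2*x^3) - (d-1)*(2*x)/(1-x^2))) (at x)"
proof -
  have "x*x \<le> (6/10)*(6/10)" using assms by (intro mult_mono) auto
  then have x2: "x^2 < 1" by (simp add: power2_eq_square)
  have x3: "2*x^3 < 1" 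
  proof -
    have "x^3 \<le> (6/10)^3" using assms by (intro power_mono) auto
    then show ?thesis by (simp add: power_divide)
  qed
  have p1: "0 < 1 - x" using assms by simp
  have p2: "0 < 1 - 2*x^3" using x3 by simp
  have p3: "0 < 1 - x^2" using x2 by simp
  have d1: "((\<lambda>x. ln (1-x)) has_real_derivative (-1/(1-x))) (at x)"
    using p1 by (auto intro!: derivative_eq_intros simp: field_simps)
  have d2: "((\<lambda>x. ln (1-2*x^3)) has_real_derivative (-(6*x^2)/(1-2*x^3))) (at x)"
    using p2 by (auto intro!: derivative_eq_intros simp: field_simps)
  have d3: "((\<lambda>x. ln (1-x^2)) has_real_derivative (-(2*x)/(1-x^2))) (at x)"
    using p3 by (auto intro!: derivative_eq_intros simp: field_simps)
  have "((\<lambda>x. - ln (1-x) - d*(2/3-1/d) * ln (1-2*x^3) + (d-1) * ln (1-x^2)) has_real_derivative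
     (- (-1/(1-x)) - d*(2/3-1/d) * (-(6*x^2)/(1-2*x^3)) + (d-1) * (-(2*x)/(1-x^2)))) (at x)"
    by (intro DERIV_add DERIV_diff DERIV_minus DERIV_cmult d1 d2 d3)
  then show ?thesis unfolding Phi3_def by (rule DERIV_cong) (simp add: field_simps)
qed

lemma P_nonneg: fixes x :: real assumes "11/25 \<le> x" "x \<le> 1/2"
  shows "0 \<le> 1/(1-x) + 6.74*(2/3-1/6.74)*(6*x^2)/(1-2*x^3) - (6.74-1)*(2*x)/(1-x^2)"
proof -
  define t where "t = 1/2 - x"
  have t: "0 \<le> t" "t \<le> 3/50" using assms by (auto simp: t_def)
  have "x*x \<le> 1/2*(1/2)" using assms by (intro mult_mono) auto
  then have x2: "x^2 < 1" by (simp add: power2_eq_square)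
  have x3: "2*x^3 < 1" 
  proof -
    have "x^3 \<le> (1/2)^3" using assms by (intro power_mono) auto
    then show ?thesis by (simp add: power_divide)
  qed
  have c1: "6.74*(2/3-1/6.74) = (262/75::real)" "6.74 - 1 = (287/50::real)" by simp_all
  have nz: "1 - x \<noteq> 0" "1 - x^2 \<noteq> 0" "1 - 2*x^3 \<noteq> 0" using x2 x3 assms by auto
  have e1: "1 - x^2 = (1-x)*(1+x)" by (simp add: algebra_simps power2_eq_square)
  have eq: "1/(1-x) + 6.74*(2/3-1/6.74)*(6*x^2)/(1-2*x^3) - (6.74-1)*(2*x)/(1-x^2)
     = (3/4 - 449/50 * t + 449/25 * t^2 + 2 * t^3) / ((1-x^2)*(1-2*x^3))"
    unfolding c1 using nz unfolding t_def e1 by (simp add: divide_simps) (simp add: algebra_simps power2_eq_square power3_eq_cube)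
  have "0 \<le> 3/4 - 449/50 * t + 449/25 * t^2 + 2 * t^3" using t zero_le_power[of t 2] zero_le_power[of t 3] by linarith
  then show ?thesis unfolding eq using x2 x3 by (intro divide_nonneg_pos) auto
qed


lemma powr_frac_pow: assumes "0 < x" "0 < q" shows "(x powr (real p / real q)) ^ q = x ^ p"
proof -
  have "(x powr (real p / real q)) ^ q = (x powr (real p / real q)) powr (real q)"
    using assms by (simp add: powr_realpow)
  also have "\<dots> = x powr (real p)" using assms by (simp add: powr_powr)
  also have "\<dots> = x ^ p" using assms by (simp add: powr_realpow)
  finally show ?thesis .
qed
lemma powr_frac_le: assumes "0 < x" "0 < q" "0 \<le> r" "x ^ p \<le> r ^ q" shows "x powr (real p / real q) \<le> r"
proof -
  have "(x powr (real p / real q)) ^ q \<le> r ^ q" using powr_frac_pow[OF assms(1,2)] assms(4) by simp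
  then show ?thesis using assms by (simp add: power_mono_iff)
qed
lemma powr_frac_ge: assumes "0 < x" "0 < q" "0 \<le> r" "r ^ q \<le> x ^ p" shows "r \<le> x powr (real p / real q)"
proof -
  have "r ^ q \<le> (x powr (real p / real q)) ^ q" using powr_frac_pow[OF assms(1,2)] assms(4) by simp
  then show ?thesis using assms by (simp add: power_mono_iff)
qed
lemma frac_pow_le: fixes a b c e :: nat assumes "0 < b" "0 < e" "int a^p * int e^q \<le> int c^q * int b^p"
  shows "(real a / real b) ^ p \<le> (real c / real e) ^ q"
proof -
  have "real_of_int (int a^p * int e^q) \<le> real_of_int (int c^q * int b^p)" using assms(3) by linarith
  then have "real a ^ p * real e ^ q \<le> real c ^ q * real b ^ p" by simp
  then show ?thesis using assms by (simp add: power_divide divide_simps mult.commute)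
qed
lemma rpowr_le: fixes a b c e p q :: nat assumes "0 < a" "0 < b" "0 < e" "0 < q" "int a^p * int e^q \<le> int c^q * int b^p"
  shows "(real a / real b) powr (real p / real q) \<le> real c / real e"
  by (rule powr_frac_le) (use assms frac_pow_le[OF assms(2,3,5)] in auto)
lemma frac_pow_ge: fixes a b c e :: nat assumes "0 < b" "0 < e" "int c^q * int b^p \<le> int a^p * int e^q"
  shows "(real c / real e) ^ q \<le> (real a / real b) ^ p"
proof -
  have "real_of_int (int c^q * int b^p) \<le> real_of_int (int a^p * int e^q)" using assms(3) by linarith
  then have "real c ^ q * real b ^ p \<le> real a ^ p * real e ^ q" by simp
  then show ?thesis using assms by (simp add: power_divide divide_simps mult.commute)
qed
lemma rpowr_ge: fixes a b c e p q :: nat assumes "0 < a" "0 < b" "0 < e" "0 < q" "int c^q * int b^p \<le> int a^p * int e^q"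
  shows "real c / real e \<le> (real a / real b) powr (real p / real q)"
  by (rule powr_frac_ge) (use assms frac_pow_ge[OF assms(2,3,5)] in auto)

lemma psi_ge: fixes w x :: real assumes "0 \<le> w" "w*(1-x) \<le> 1-2*x" "0 \<le> x" "x < 1"
  shows "x \<le> (1-w)/(2-w)"
proof -
  have "w < 2"
  proof (rule ccontr)
    assume "\<not> w < 2"
    then have "2*(1-x) \<le> w*(1-x)" using assms by (intro mult_right_mono) auto
    then have "2*(1-x) \<le> 1-2*x" using assms(2) by (rule order_trans)
    then show False by simp
  qed
  then show ?thesis using assms by (simp add: divide_simps) (simp add: algebra_simps)
qed

lemma psi_le: fixes w x :: real assumes "0 \<le> w" "w \<le> 1" "1-2*x \<le> w*(1-x)"
  shows "(1-w)/(2-w) \<le> x"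
  using assms by (simp add: divide_simps) (simp add: algebra_simps)

lemma powr_split: "0 < (v::real) \<Longrightarrow> v powr (real n + e) = v^n * v powr e"
  by (simp add: powr_add powr_realpow)

lemma psi674: "25/56 \<le> Psi 6.74 (25/56)"
proof -
  define v :: real where "v = real 1886 / real 2511"
  have hv: "Psi_hat (25/56) = v" by (simp add: power_divide Psi_hat_def v_def)
  have e: "(6.74::real) - 1 = real 5 + real 37 / real 50" by simp
  have vp: "0 < v" by (simp add: v_def)
  have b: "v powr (real 37 / real 50) \<le> real 195 / real 241" unfolding v_def
    by (rule rpowr_le; (simp only: of_nat_numeral)?; simp)
  define w where "w = v powr (6.74 - 1)"
  have w: "w = v^5 * v powr (real 37 / real 50)" unfolding w_def e using vp by (rule powr_split)
  have "w \<le> v^5 * (real 195 / real 241)" unfolding w using b vp by (intro mult_left_mono) auto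
  also have "\<dots> \<le> 6/31" by (simp add: v_def power_divide)
  finally have "w * (1 - 25/56) \<le> 1 - 2*(25/56)" by simp
  moreover have "0 \<le> w" by (simp add: w_def)
  ultimately have "25/56 \<le> (1-w)/(2-w)" by (intro psi_ge) auto
  then show ?thesis by (simp add: Psi_def Psi_dot_def hv w_def)
qed

lemma phi674: "0 < Phi3 6.74 (25/56)"
proof -
  define A :: real where "A = real 2511 / real 3136"
  define B :: real where "B = 31/56"
  define C :: real where "C = real 72183 / real 87808"
  have pos: "0 < A" "0 < B" "0 < C" by (simp_all add: A_def B_def C_def)
  have eqP: "Phi3 6.74 (25/56) = - ln B - (real 3 + real 37 / real 75) * ln C + (real 5 + real 37 / real 50) * ln A"
    by (simp add: power_divide Phi3_def A_def B_def C_def)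
  have bA: "real 330 / real 389 \<le> A powr (real 37 / real 50)" unfolding A_def
    by (rule rpowr_ge; (simp only: of_nat_numeral)?; simp)
  have bC: "C powr (real 37 / real 75) \<le> real 335 / real 369" unfolding C_def
    by (rule rpowr_le; (simp only: of_nat_numeral)?; simp)
  have eA: "A powr (real 5 + real 37 / real 50) = A^5 * A powr (real 37 / real 50)" by (rule powr_split[OF pos(1)])
  have eC: "C powr (real 3 + real 37 / real 75) = C^3 * C powr (real 37 / real 75)" by (rule powr_split[OF pos(3)])
  have "B * C powr (real 3 + real 37 / real 75) \<le> B * (C^3 * (real 335 / real 369))"
    unfolding eC using bC pos by (intro mult_left_mono) auto
  also have "\<dots> < A^5 * (real 330 / real 389)" by (simp add: power_divide A_def B_def C_def)
  also have "\<dots> \<le> A powr (real 5 + real 37 / real 50)" unfolding eA using bA pos by (intro mult_left_mono) auto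
  finally have lt: "B * C powr (real 3 + real 37 / real 75) < A powr (real 5 + real 37 / real 50)" .
  have "ln (B * C powr (real 3 + real 37 / real 75)) < ln (A powr (real 5 + real 37 / real 50))"
    using lt pos by (subst ln_less_cancel_iff) auto
  then have "ln B + (real 3 + real 37 / real 75) * ln C < (real 5 + real 37 / real 50) * ln A"
    using pos by (simp add: ln_mult)
  then show ?thesis unfolding eqP by linarith
qed

lemma psi75a: "15/32 \<le> Psi 7.5 (15/32)"
proof -
  define v :: real where "v = real 574 / real 799"
  have hv: "Psi_hat (15/32) = v" by (simp add: power_divide Psi_hat_def v_def)
  have e: "(7.5::real) - 1 = real 13 / real 2" by simp
  have b: "v powr (real 13 / real 2) \<le> real 2 / real 17" unfolding v_def
    by (rule rpowr_le; (simp only: of_nat_numeral)?; simp)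
  define w where "w = v powr (7.5 - 1)"
  have "w \<le> 2/17" using b unfolding w_def e by simp
  then have "w * (1 - 15/32) \<le> 1 - 2*(15/32)" by simp
  moreover have "0 \<le> w" by (simp add: w_def)
  ultimately have "15/32 \<le> (1-w)/(2-w)" by (intro psi_ge) auto
  then show ?thesis by (simp add: Psi_def Psi_dot_def hv w_def)
qed

lemma psi75b: "Psi 7.5 (8/17) \<le> 8/17"
proof -
  define v :: real where "v = real 161 / real 225"
  have hv: "Psi_hat (8/17) = v" by (simp add: power_divide Psi_hat_def v_def)
  have e: "(7.5::real) - 1 = real 13 / real 2" by simp
  have b: "real 1 / real 9 \<le> v powr (real 13 / real 2)" unfolding v_def
    by (rule rpowr_ge; (simp only: of_nat_numeral)?; simp)
  define w where "w = v powr (7.5 - 1)"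
  have "1/9 \<le> w" using b unfolding w_def e by simp
  then have "1 - 2*(8/17) \<le> w * (1 - 8/17)" by simp
  moreover have "0 \<le> w" by (simp add: w_def)
  moreover have "w \<le> 1" unfolding w_def by (rule powr_le1) (auto simp: v_def)
  ultimately have "(1-w)/(2-w) \<le> 8/17" by (intro psi_le) auto
  then show ?thesis by (simp add: Psi_def Psi_dot_def hv w_def)
qed

lemma phi75: fixes x :: real assumes "15/32 \<le> x" "x \<le> 8/17" shows "Phi3 7.5 x < 0"
proof -
  have x0: "0 \<le> x" using assms by simp
  have l1: "ln (9/17) \<le> ln (1 - x)" using assms by (subst ln_le_cancel_iff) auto
  have "x^3 \<le> (8/17)^3" using assms x0 by (intro power_mono) auto
  then have "1 - 2*(8/17)^3 \<le> 1 - 2*x^3" by simp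
  then have l2: "ln (3889/4913) \<le> ln (1 - 2*x^3)" by (subst ln_le_cancel_iff) (auto simp: power_divide)
  have "(15/32)^2 \<le> x^2" using assms by (intro power_mono) auto
  moreover have "x^2 \<le> (8/17)^2" using assms x0 by (intro power_mono) auto
  ultimately have "1 - x^2 \<le> 1 - (15/32)^2" "0 < 1 - x^2" by (auto simp: power_divide)
  then have l3: "ln (1 - x^2) \<le> ln (799/1024)" by (subst ln_le_cancel_iff) (auto simp: power_divide)
  have num: "(799/1024::real)^13 < (9/17)^2 * (3889/4913)^8" by (simp add: power_divide)
  have "ln ((799/1024::real)^13) < ln ((9/17)^2 * (3889/4913)^8)"
    using num by (subst ln_less_cancel_iff) auto
  then have "13 * ln (799/1024::real) < 2 * ln (9/17) + 8 * ln (3889/4913)"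
    by (simp add: ln_mult ln_realpow)
  moreover have "Phi3 7.5 x = - ln (1 - x) - 4 * ln (1 - 2 * x^3) + 13/2 * ln (1 - x^2)"
    by (simp add: Phi3_def)
  ultimately show ?thesis using l1 l2 l3 by linarith
qed

lemma phi_mono674: assumes "25/56 \<le> y" "y \<le> 1/2" shows "Phi3 6.74 (25/56) \<le> Phi3 6.74 y"
proof (rule DERIV_nonneg_imp_increasing_open[of "25/56" y "\<lambda>x. Phi3 6.74 x"])
  show "25/56 \<le> y" using assms by simp
  show "\<exists>D. ((\<lambda>x. Phi3 6.74 x) has_real_derivative D) (at x) \<and> 0 \<le> D" if "25/56 < x" "x < y" for x
    using deriv_Phi3[of x "6.74"] P_nonneg[of x] that assms by auto
  show "continuous_on {25/56..y} (\<lambda>x. Phi3 6.74 x)"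
  proof (rule continuous_at_imp_continuous_on, rule ballI)
    fix x assume "x \<in> {25/56..y}"
    then have "0 \<le> x" "x < 1/2+1/10" using assms by auto
    from deriv_Phi3[OF this] show "isCont (\<lambda>x. Phi3 6.74 x) x" by (rule DERIV_isCont)
  qed
qed

lemma part1: assumes U: "\<forall>d\<in>{6.74..7.5::real}. \<exists>!x. x \<in> {3/8..1/2} \<and> Psi d x = x"
  shows "continuous_on {6.74..7.5} Phi_star"
  using cont_Phi_star[OF U] by (simp add: SD_def)

lemma h674: "Psi 6.74 (1/2) \<le> 1/2"
proof -
  have d1: "(6.74::real) \<in> SD" by (simp add: SD_def)
  have "(1/2::real) \<in> TX" by (simp add: TX_def)
  from w_bounds[OF d1 this] show ?thesis unfolding Psi_def Psi_dot_def
    by (intro psi_le) auto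
qed

lemma part2: assumes U: "\<forall>d\<in>{6.74..7.5::real}. \<exists>!x. x \<in> {3/8..1/2} \<and> Psi d x = x"
  shows "Phi_star 6.74 > 0"
proof -
  have d1: "(6.74::real) \<in> SD" by (simp add: SD_def)
  have x1: "25/56 \<le> xfix 6.74 \<and> xfix 6.74 \<le> 1/2"
    by (rule xfix_loc[OF U d1]) (use psi674 h674 in auto)
  show ?thesis unfolding Phi_star_def
    using phi674 phi_mono674[of "xfix 6.74"] x1 by linarith
qed

lemma part3: assumes U: "\<forall>d\<in>{6.74..7.5::real}. \<exists>!x. x \<in> {3/8..1/2} \<and> Psi d x = x"
  shows "Phi_star 7.5 < 0"
proof -
  have d2: "(7.5::real) \<in> SD" by (simp add: SD_def)
  have x2: "15/32 \<le> xfix 7.5 \<and> xfix 7.5 \<le> 8/17"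
    by (rule xfix_loc[OF U d2]) (use psi75a psi75b in auto)
  show ?thesis unfolding Phi_star_def using phi75 x2 by auto
qed

theorem lemma4p2:
  assumes "\<forall>d\<in>{6.74..7.5::real}. \<exists>!x. x \<in> {3/8..1/2} \<and> Psi d x = x"
  shows "continuous_on {6.74..7.5} Phi_star \<and> Phi_star 6.74 > 0 \<and> Phi_star 7.5 < 0"
  using part1[OF assms] part2[OF assms] part3[OF assms] by blast

end
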